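(* Let $\alpha>0$ and $f\in H^{\alpha+1}(\mathbb{R}/2\pi\mathbb{Z})$ be fixed. Then for all $|\xi|$ sufficiently small, $$e^{-i\xi x}\partial_x\Lambda^\alpha e^{i\xi x}f(x)=\partial_x\Lambda^\alpha f(x)+i\xi|\xi|^\alpha\hat f(0)+\Big(\sum_{l=1}^\infty i\binom{\alpha+1}{2l-1}\Lambda^{\alpha-2(l-1)}\xi^{2l-1}\Big)\mathcal{P}f(x)+\Big(\sum_{r=1}^\infty\binom{\alpha+1}{2r}\partial_x\Lambda^{\alpha-2r}\xi^{2r}\Big)\mathcal{P}f(x),$$ where $\binom{m}{n}=\frac{m(m-1)\cdots(m-n+1)}{n!}$ is the generalized binomial coefficient and $\mathcal{P}$ is the orthogonal projection of $H^{\alpha+1}(\mathbb{R}/2\pi\mathbb{Z})$ onto the mean-zero subspace.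
   Context: Here $e^{i\xi x}f$ is viewed as a function on $\mathbb{R}$ and $\partial_x\Lambda^\alpha$ acts as the Fourier multiplier with symbol $i k|k|^\alpha$; for a $2\pi$-periodic $f=\sum_k\hat f(k)e^{ikx}$, this gives $e^{-i\xi x}\partial_x\Lambda^\alpha e^{i\xi x}f=\sum_k i(k+\xi)|k+\xi|^\alpha\hat f(k)e^{ikx}$. On the torus, $\Lambda^s g=\sum_{k\neq0}|k|^s\hat g(k)e^{ikx}$ for any real $s$ when $g$ is mean-zero (for $s<0$ this defines $\Lambda^s$ on mean-zero functions). $\hat f(0)$ is the zeroth Fourier coefficient. *)

theory Defs
  imports "HOL-Analysis.Analysis"
begin

text \<open>A 2pi-periodic function is represented by its Fourier coefficients
  c :: int => complex  (f = sum_k c k e^{ikx}).  All operators are Fourier multipliers.\<close>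

definition in_Hs :: "real \<Rightarrow> (int \<Rightarrow> complex) \<Rightarrow> bool" where
  "in_Hs s c \<longleftrightarrow> (\<lambda>k. (1 + (real_of_int k)\<^sup>2) powr s * (cmod (c k))\<^sup>2) summable_on UNIV"

text \<open>e^{-i xi x} d_x Lambda^alpha e^{i xi x} f : multiplier i(k+xi)|k+xi|^alpha.\<close>
definition twisted_op :: "real \<Rightarrow> real \<Rightarrow> (int \<Rightarrow> complex) \<Rightarrow> int \<Rightarrow> complex" where
  "twisted_op \<alpha> \<xi> c k = \<i> * of_real ((of_int k + \<xi>) * \<bar>of_int k + \<xi>\<bar> powr \<alpha>) * c k"

definition dx_Lambda :: "real \<Rightarrow> (int \<Rightarrow> complex) \<Rightarrow> int \<Rightarrow> complex" where
  "dx_Lambda \<alpha> c k = \<i> * of_real (of_int k * \<bar>of_int k\<bar> powr \<alpha>) * c k"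

definition dx :: "(int \<Rightarrow> complex) \<Rightarrow> int \<Rightarrow> complex" where
  "dx c k = \<i> * of_int k * c k"

definition Lambda :: "real \<Rightarrow> (int \<Rightarrow> complex) \<Rightarrow> int \<Rightarrow> complex" where
  "Lambda s c k = (if k = 0 then 0 else of_real (\<bar>of_int k\<bar> powr s) * c k)"

definition proj0 :: "(int \<Rightarrow> complex) \<Rightarrow> int \<Rightarrow> complex" where
  "proj0 c k = (if k = 0 then 0 else c k)"

definition const_fun :: "complex \<Rightarrow> int \<Rightarrow> complex" where
  "const_fun a k = (if k = 0 then a else 0)"

text \<open>Convergence in L^2 (equivalently in l^2 of Fourier coefficients, by Parseval).\<close>
definition L2_tendsto :: "(nat \<Rightarrow> int \<Rightarrow> complex) \<Rightarrow> (int \<Rightarrow> complex) \<Rightarrow> bool" where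
  "L2_tendsto F g \<longleftrightarrow>
     (\<forall>N. (\<lambda>k. (cmod (F N k - g k))\<^sup>2) summable_on UNIV) \<and>
     ((\<lambda>N. infsum (\<lambda>k. (cmod (F N k - g k))\<^sup>2) UNIV) \<longlonglongrightarrow> 0)"

definition term1 :: "real \<Rightarrow> real \<Rightarrow> (int \<Rightarrow> complex) \<Rightarrow> nat \<Rightarrow> int \<Rightarrow> complex" where
  "term1 \<alpha> \<xi> c l k = \<i> * of_real (((\<alpha> + 1) gchoose (2*l - 1)) * \<xi> ^ (2*l - 1))
      * Lambda (\<alpha> - 2 * (real l - 1)) (proj0 c) k"

definition term2 :: "real \<Rightarrow> real \<Rightarrow> (int \<Rightarrow> complex) \<Rightarrow> nat \<Rightarrow> int \<Rightarrow> complex" where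
  "term2 \<alpha> \<xi> c r k = of_real (((\<alpha> + 1) gchoose (2*r)) * \<xi> ^ (2*r))
      * dx (Lambda (\<alpha> - 2 * real r) (proj0 c)) k"

end

theory Submission
  imports Defs
begin

lemma abs_gchoose_summable:
  fixes a z :: real
  assumes "\<bar>z\<bar> < 1"
  shows "summable (\<lambda>n. \<bar>a gchoose n\<bar> * \<bar>z\<bar>^n)"
proof -
  have cr: "conv_radius (\<lambda>n. norm (a gchoose n)) = conv_radius (\<lambda>n. a gchoose n)"
    by (rule conv_radius_norm)
  have "ereal (norm \<bar>z\<bar>) < conv_radius (\<lambda>n. a gchoose n)"
  proof (cases "a \<in> \<nat>")
    case True thus ?thesis unfolding conv_radius_gchoose by simp
  next
    case False thus ?thesis unfolding conv_radius_gchoose using assms by simp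
  qed
  hence "ereal (norm \<bar>z\<bar>) < conv_radius (\<lambda>n. norm (a gchoose n))" by (simp only: cr)
  from summable_in_conv_radius[OF this] show ?thesis by simp
qed
lemma R1:
  fixes k :: int and \<xi> \<alpha> :: real
  assumes "k \<noteq> 0" "\<bar>\<xi>\<bar> < 1"
  shows "(of_int k + \<xi>) * \<bar>of_int k + \<xi>\<bar> powr \<alpha>
       = of_int k * \<bar>of_int k\<bar> powr \<alpha> * (1 + \<xi> / of_int k) powr (\<alpha> + 1)"
proof -
  define x where "x = \<xi> / of_int k"
  have k1: "\<bar>real_of_int k\<bar> \<ge> 1" using assms(1) by linarith
  have "\<bar>x\<bar> < 1" using assms k1 by (simp add: x_def abs_divide divide_less_eq)
  hence x1: "1 + x > 0" by linarith
  have e1: "of_int k + \<xi> = of_int k * (1 + x)" using assms(1) by (simp add: x_def field_simps)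
  have e2: "\<bar>of_int k + \<xi>\<bar> = \<bar>of_int k\<bar> * (1 + x)" using x1 by (simp add: e1 abs_mult)
  have "(of_int k + \<xi>) * \<bar>of_int k + \<xi>\<bar> powr \<alpha>
      = of_int k * (1 + x) * (\<bar>of_int k\<bar> powr \<alpha> * (1 + x) powr \<alpha>)"
    by (simp add: e2 powr_mult x1 del: of_int_add) (simp add: e1)
  also have "\<dots> = of_int k * \<bar>of_int k\<bar> powr \<alpha> * ((1 + x) powr \<alpha> * (1+x) powr 1)"
    using x1 by simp
  also have "(1 + x) powr \<alpha> * (1+x) powr 1 = (1 + x) powr (\<alpha> + 1)" by (simp add: powr_add)
  finally show ?thesis by (simp add: x_def)
qed

lemma alg1: fixes k A P G X :: real assumes "k \<noteq> 0" "P \<noteq> 0"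
  shows "k * A * (G * (X / (k * P))) = G * X * (A / P)"
  using assms by (simp add: field_simps)
lemma alg2: fixes k A P G X :: real assumes "P \<noteq> 0"
  shows "k * A * (G * (X / P)) = G * X * (k * (A / P))"
  using assms by (simp add: field_simps)

lemma p1: "(r::real) ^ (2*m+1) = r * \<bar>r\<bar> ^ (2*m)"
proof -
  have "\<bar>r\<bar> ^ (2*m) = r ^ (2*m)" by (rule power_even_abs) simp
  thus ?thesis by simp
qed
lemma q1: assumes "(r::real) > 0" shows "r powr (a - 2 * real m) = r powr a / r ^ (2*m)"
proof -
  have "r powr (a - 2 * real m) = r powr a / r powr (real (2*m))" by (simp add: powr_diff)
  also have "r powr (real (2*m)) = r ^ (2*m)" using assms by (rule powr_realpow)
  finally show ?thesis .
qed

lemma R2: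
  fixes k :: int and \<xi> \<alpha> G :: real and m :: nat
  assumes "k \<noteq> 0"
  shows "of_int k * \<bar>of_int k\<bar> powr \<alpha> * (G * (\<xi> / of_int k) ^ (2*m+1))
       = G * \<xi> ^ (2*m+1) * \<bar>of_int k\<bar> powr (\<alpha> - 2 * real m)"
proof -
  have kp: "\<bar>real_of_int k\<bar> > 0" using assms by simp
  have P: "\<bar>real_of_int k\<bar> ^ (2*m) \<noteq> 0" using kp by simp
  have k0: "real_of_int k \<noteq> 0" using assms by simp
  show ?thesis unfolding q1[OF kp] power_divide p1[of "real_of_int k"] by (rule alg1[OF k0 P])
qed

lemma R3:
  fixes k :: int and \<xi> \<alpha> G :: real and m :: nat
  assumes "k \<noteq> 0"
  shows "of_int k * \<bar>of_int k\<bar> powr \<alpha> * (G * (\<xi> / of_int k) ^ (2*m+2))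
       = G * \<xi> ^ (2*m+2) * (of_int k * \<bar>of_int k\<bar> powr (\<alpha> - 2 * real (Suc m)))"
proof -
  have kp: "\<bar>real_of_int k\<bar> > 0" using assms by simp
  have p: "(real_of_int k) ^ (2*m+2) = \<bar>of_int k\<bar> ^ (2*(m+1))"
    by (metis power_even_abs even_mult_iff even_two_times_div_two dvd_triv_left mult_2 add.commute add_2_eq_Suc' Suc_eq_plus1 mult_Suc_right)
  have s: "2 * real (Suc m) = 2 * real (m+1)" by simp
  have P: "\<bar>real_of_int k\<bar> ^ (2*(m+1)) \<noteq> 0" using kp by simp
  show ?thesis unfolding s q1[OF kp] power_divide p by (rule alg2[OF P])
qed
lemma summable_reindex_nonneg:
  fixes B :: "nat \<Rightarrow> real"
  assumes "summable B" "\<And>n. B n \<ge> 0" "strict_mono g"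
  shows "summable (\<lambda>m. B (g m))"
proof -
  define F where "F n = (if n \<in> range g then B n else 0)" for n
  have "summable F"
    by (rule summable_comparison_test[OF _ assms(1)]) (auto simp: F_def assms(2))
  hence "summable (\<lambda>m. F (g m))"
    using summable_mono_reindex[of g F] assms(3) by (auto simp: F_def)
  thus ?thesis by (simp add: F_def)
qed

lemma split_eo:
  fixes f :: "nat \<Rightarrow> real"
  assumes "summable (\<lambda>n. \<bar>f n\<bar>)" "f sums s"
  shows "summable (\<lambda>m. f (2*m+1)) \<and> summable (\<lambda>m. f (2*m+2)) \<and>
         s = f 0 + (\<Sum>m. f (2*m+1)) + (\<Sum>m. f (2*m+2))"
proof -
  define Od where "Od n = (if odd n then f n else 0)" for n
  define E where "E n = (if even n \<and> n > 0 then f n else 0)" for n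
  define Z where "Z (n::nat) = (if n = 0 then f 0 else (0::real))" for n
  have sO: "summable Od"
    by (rule summable_comparison_test[OF _ assms(1)]) (auto simp: Od_def)
  have sE: "summable E"
    by (rule summable_comparison_test[OF _ assms(1)]) (auto simp: E_def)
  have m1: "strict_mono (\<lambda>m::nat. 2*m+1)" by (auto simp: strict_mono_def)
  have m2: "strict_mono (\<lambda>m::nat. 2*m+2)" by (auto simp: strict_mono_def)
  have zO: "\<And>n. n \<notin> range (\<lambda>m::nat. 2*m+1) \<Longrightarrow> Od n = 0"
  proof -
    fix n :: nat assume "n \<notin> range (\<lambda>m::nat. 2*m+1)"
    hence "\<not> odd n" by (metis oddE rangeI)
    thus "Od n = 0" by (simp add: Od_def)
  qed
  have zE: "\<And>n. n \<notin> range (\<lambda>m::nat. 2*m+2) \<Longrightarrow> E n = 0"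
  proof -
    fix n :: nat assume a: "n \<notin> range (\<lambda>m::nat. 2*m+2)"
    have "\<not> (even n \<and> n > 0)"
    proof
      assume "even n \<and> n > 0"
      then obtain j where "n = 2*j" "j > 0" by (auto elim!: evenE)
      hence "n = 2*(j-1)+2" by simp
      thus False using a by blast
    qed
    thus "E n = 0" unfolding E_def by presburger
  qed
  have rO: "(\<lambda>m. Od (2*m+1)) sums suminf Od"
    using sums_mono_reindex[of "\<lambda>m. 2*m+1" Od "suminf Od", OF m1 zO] sO by (simp add: summable_sums)
  have rE: "(\<lambda>m. E (2*m+2)) sums suminf E"
    using sums_mono_reindex[of "\<lambda>m. 2*m+2" E "suminf E", OF m2 zE] sE by (simp add: summable_sums)
  have eq: "f = (\<lambda>n. Z n + Od n + E n)"
    by (auto simp: Z_def Od_def E_def)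
  have "(\<lambda>n. Z n + Od n + E n) sums (f 0 + suminf Od + suminf E)"
    by (intro sums_add sO[THEN summable_sums] sE[THEN summable_sums])
       (use sums_single[of 0 "\<lambda>_. f 0"] in \<open>simp add: Z_def\<close>)
  hence "s = f 0 + suminf Od + suminf E" using assms(2) eq sums_unique2 by metis
  moreover have "(\<lambda>m. f (2*m+1)) sums suminf Od" using rO by (simp add: Od_def)
  moreover have "(\<lambda>m. f (2*m+2)) sums suminf E" using rE by (simp add: E_def)
  ultimately show ?thesis by (simp add: sums_iff)
qed

lemma L2_tail:
  fixes u :: "nat \<Rightarrow> int \<Rightarrow> complex" and E :: "nat \<Rightarrow> real" and W :: "int \<Rightarrow> real"
  assumes sE: "summable E" and E0: "\<And>n. E n \<ge> 0"
  and bnd: "\<And>m k. norm (u (Suc m) k) \<le> E m * W k"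
  and sW: "(\<lambda>k. (W k)^2) summable_on UNIV" and W0: "\<And>k. W k \<ge> 0"
  shows "L2_tendsto (\<lambda>N k. \<Sum>l=1..N. u l k) (\<lambda>k. \<Sum>m. u (Suc m) k)"
proof -
  define T where "T N = (\<Sum>i. E (i + N))" for N
  have sEN: "summable (\<lambda>i. E (i + N))" for N using sE by (simp add: summable_iff_shift)
  have T0: "T N \<ge> 0" for N unfolding T_def by (intro suminf_nonneg sEN E0)
  have su: "summable (\<lambda>m. norm (u (Suc m) k))" for k
    by (rule summable_comparison_test[OF _ summable_mult2[OF sE, of "W k"]]) (simp add: bnd)
  have diff: "norm ((\<Sum>l=1..N. u l k) - (\<Sum>m. u (Suc m) k)) \<le> T N * W k" for N k
  proof -
    have s1: "summable (\<lambda>m. u (Suc m) k)" by (rule summable_norm_cancel[OF su])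
    have "(\<Sum>l=1..N. u l k) = (\<Sum>m<N. u (Suc m) k)"
      using sum.atLeast1_atMost_eq[of "\<lambda>l. u l k" N] by simp
    hence "(\<Sum>l=1..N. u l k) - (\<Sum>m. u (Suc m) k) = - (\<Sum>i. u (Suc (i + N)) k)"
      using suminf_split_initial_segment[OF s1, of N] by simp
    hence "norm ((\<Sum>l=1..N. u l k) - (\<Sum>m. u (Suc m) k)) = norm (\<Sum>i. u (Suc (i + N)) k)"
      by simp
    also have "\<dots> \<le> (\<Sum>i. norm (u (Suc (i + N)) k))"
      by (rule summable_norm) (use su[of k] summable_iff_shift[of "\<lambda>m. norm (u (Suc m) k)" N] in simp)
    also have "\<dots> \<le> (\<Sum>i. E (i + N) * W k)"
      by (rule suminf_le) (use su[of k] summable_iff_shift[of "\<lambda>m. norm (u (Suc m) k)" N] bnd sEN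
           in \<open>auto intro: summable_mult2\<close>)
    also have "\<dots> = T N * W k" unfolding T_def by (rule suminf_mult2[symmetric, OF sEN])
    finally show ?thesis .
  qed
  have sq: "(cmod ((\<Sum>l=1..N. u l k) - (\<Sum>m. u (Suc m) k)))\<^sup>2 \<le> (T N)^2 * (W k)^2" for N k
  proof -
    have "(cmod ((\<Sum>l=1..N. u l k) - (\<Sum>m. u (Suc m) k)))\<^sup>2 \<le> (T N * W k)^2"
      by (rule power_mono[OF diff]) simp
    thus ?thesis by (simp add: power_mult_distrib)
  qed
  have sum1: "(\<lambda>k. (cmod ((\<Sum>l=1..N. u l k) - (\<Sum>m. u (Suc m) k)))\<^sup>2) summable_on UNIV" for N
    by (rule summable_on_comparison_test[OF summable_on_cmult_right[OF sW, of "(T N)^2"]]) (use sq in auto)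
  define C where "C = infsum (\<lambda>k. (W k)^2) UNIV"
  have le: "infsum (\<lambda>k. (cmod ((\<Sum>l=1..N. u l k) - (\<Sum>m. u (Suc m) k)))\<^sup>2) UNIV \<le> (T N)^2 * C" for N
  proof -
    have "infsum (\<lambda>k. (cmod ((\<Sum>l=1..N. u l k) - (\<Sum>m. u (Suc m) k)))\<^sup>2) UNIV
          \<le> infsum (\<lambda>k. (T N)^2 * (W k)^2) UNIV"
      by (rule infsum_mono[OF sum1 summable_on_cmult_right[OF sW]]) (use sq in auto)
    also have "\<dots> = (T N)^2 * C" unfolding C_def by (rule infsum_cmult_right') 
    finally show ?thesis .
  qed
  have ge: "infsum (\<lambda>k. (cmod ((\<Sum>l=1..N. u l k) - (\<Sum>m. u (Suc m) k)))\<^sup>2) UNIV \<ge> 0" for N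
    by (rule infsum_nonneg) simp
  have "T = (\<lambda>N. suminf E - sum E {..<N})"
    unfolding T_def by (rule ext) (simp add: suminf_minus_initial_segment[OF sE])
  moreover have "(\<lambda>N. suminf E - sum E {..<N}) \<longlonglongrightarrow> suminf E - suminf E"
    by (intro tendsto_diff tendsto_const summable_LIMSEQ sE)
  ultimately have "T \<longlonglongrightarrow> 0" by simp
  hence "(\<lambda>N. (T N)^2 * C) \<longlonglongrightarrow> 0^2 * C" by (intro tendsto_intros)
  hence "(\<lambda>N. (T N)^2 * C) \<longlonglongrightarrow> 0" by simp
  hence "(\<lambda>N. infsum (\<lambda>k. (cmod ((\<Sum>l=1..N. u l k) - (\<Sum>m. u (Suc m) k)))\<^sup>2) UNIV) \<longlonglongrightarrow> 0"
    by (rule tendsto_sandwich[rotated 2, OF tendsto_const]) (use le ge in auto)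
  thus ?thesis unfolding L2_tendsto_def using sum1 by blast
qed


lemma pointwise:
  fixes k :: int and \<xi> \<alpha> :: real and c :: "int \<Rightarrow> complex"
  assumes k: "k \<noteq> 0" and xi: "\<bar>\<xi>\<bar> < 1"
  shows "summable (\<lambda>m. term1 \<alpha> \<xi> c (Suc m) k) \<and> summable (\<lambda>m. term2 \<alpha> \<xi> c (Suc m) k) \<and>
     twisted_op \<alpha> \<xi> c k = dx_Lambda \<alpha> c k + (\<Sum>m. term1 \<alpha> \<xi> c (Suc m) k)
        + (\<Sum>m. term2 \<alpha> \<xi> c (Suc m) k)"
proof -
  define a where "a = \<alpha> + 1"
  define x where "x = \<xi> / of_int k"
  define f where "f n = (a gchoose n) * x ^ n" for n
  have k1: "\<bar>real_of_int k\<bar> \<ge> 1" using k by linarith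
  have x1: "\<bar>x\<bar> < 1" using xi k1 by (simp add: x_def abs_divide divide_less_eq)
  have fs: "f sums (1 + x) powr a" unfolding f_def by (rule gen_binomial_real[OF x1])
  have fa: "summable (\<lambda>n. \<bar>f n\<bar>)"
    using abs_gchoose_summable[OF x1, of a] by (simp add: f_def abs_mult power_abs)
  from split_eo[OF fa fs] have
    so: "summable (\<lambda>m. f (2*m+1))" and se: "summable (\<lambda>m. f (2*m+2))" and
    sp: "(1 + x) powr a = f 0 + (\<Sum>m. f (2*m+1)) + (\<Sum>m. f (2*m+2))" by auto
  define K where "K = \<i> * complex_of_real (of_int k * \<bar>of_int k\<bar> powr \<alpha>) * c k"
  have t1: "term1 \<alpha> \<xi> c (Suc m) k = K * of_real (f (2*m+1))" for m
  proof -
    have e: "2 * Suc m - 1 = 2*m+1" by simp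
    have e2: "\<alpha> - 2 * (real (Suc m) - 1) = \<alpha> - 2 * real m" by simp
    have "complex_of_real (of_int k * \<bar>of_int k\<bar> powr \<alpha>) * of_real (f (2*m+1))
        = of_real ((a gchoose (2*m+1)) * \<xi> ^ (2*m+1) * \<bar>of_int k\<bar> powr (\<alpha> - 2 * real m))"
      unfolding of_real_mult[symmetric] f_def x_def by (subst R2[OF k]) simp
    thus ?thesis unfolding term1_def K_def e e2 Lambda_def proj0_def a_def using k
      by (simp add: algebra_simps)
  qed
  have t2: "term2 \<alpha> \<xi> c (Suc m) k = K * of_real (f (2*m+2))" for m
  proof -
    have e: "2 * Suc m = 2*m+2" by simp
    have "complex_of_real (of_int k * \<bar>of_int k\<bar> powr \<alpha>) * of_real (f (2*m+2))
        = of_real ((a gchoose (2*m+2)) * \<xi> ^ (2*m+2) * (of_int k * \<bar>of_int k\<bar> powr (\<alpha> - 2 * real (Suc m))))"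
      unfolding of_real_mult[symmetric] f_def x_def by (subst R3[OF k]) simp
    thus ?thesis unfolding term2_def K_def e dx_def Lambda_def proj0_def a_def using k
      by (simp add: algebra_simps)
  qed
  have s1: "(\<lambda>m. term1 \<alpha> \<xi> c (Suc m) k) sums (K * of_real (\<Sum>m. f (2*m+1)))"
    unfolding t1 by (intro sums_mult sums_of_real summable_sums[OF so])
  have s2: "(\<lambda>m. term2 \<alpha> \<xi> c (Suc m) k) sums (K * of_real (\<Sum>m. f (2*m+2)))"
    unfolding t2 by (intro sums_mult sums_of_real summable_sums[OF se])
  have tw: "twisted_op \<alpha> \<xi> c k = K * of_real ((1 + x) powr a)"
    unfolding twisted_op_def K_def x_def a_def by (subst R1[OF k xi]) (simp add: algebra_simps)
  have dl: "dx_Lambda \<alpha> c k = K * of_real (f 0)"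
    unfolding dx_Lambda_def K_def f_def by (simp add: algebra_simps)
  show ?thesis using s1 s2 sums_summable sums_unique tw dl sp
  proof -
    have "twisted_op \<alpha> \<xi> c k = K * of_real (f 0) + K * of_real (\<Sum>m. f (2*m+1)) + K * of_real (\<Sum>m. f (2*m+2))"
      unfolding tw sp by (simp add: distrib_left)
    thus ?thesis using s1 s2 dl by (simp add: sums_iff)
  qed
qed


lemma bnd1:
  fixes \<alpha> \<xi> :: real and c :: "int \<Rightarrow> complex"
  assumes "\<alpha> > 0"
  shows "norm (term1 \<alpha> \<xi> c (Suc m) k) \<le>
     (\<bar>(\<alpha>+1) gchoose (2*m+1)\<bar> * \<bar>\<xi>\<bar>^(2*m+1)) * (\<bar>of_int k\<bar> powr \<alpha> * cmod (c k))"
proof (cases "k = 0")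
  case True thus ?thesis by (simp add: term1_def Lambda_def)
next
  case False
  have k1: "\<bar>real_of_int k\<bar> \<ge> 1" using False by linarith
  have e: "2 * Suc m - 1 = 2*m+1" by simp
  have e2: "\<alpha> - 2 * (real (Suc m) - 1) = \<alpha> - 2 * real m" by simp
  have pw: "\<bar>real_of_int k\<bar> powr (\<alpha> - 2 * real m) \<le> \<bar>real_of_int k\<bar> powr \<alpha>"
    by (rule powr_mono[OF _ k1]) simp
  have "norm (term1 \<alpha> \<xi> c (Suc m) k) =
     (\<bar>(\<alpha>+1) gchoose (2*m+1)\<bar> * \<bar>\<xi>\<bar>^(2*m+1)) * (\<bar>of_int k\<bar> powr (\<alpha> - 2 * real m) * cmod (c k))"
    unfolding term1_def e e2 Lambda_def proj0_def using False
    by (simp add: norm_mult abs_mult power_abs norm_power)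
  also have "\<dots> \<le> (\<bar>(\<alpha>+1) gchoose (2*m+1)\<bar> * \<bar>\<xi>\<bar>^(2*m+1)) * (\<bar>of_int k\<bar> powr \<alpha> * cmod (c k))"
    by (intro mult_left_mono mult_right_mono pw) auto
  finally show ?thesis .
qed

lemma bnd2:
  fixes \<alpha> \<xi> :: real and c :: "int \<Rightarrow> complex"
  assumes "\<alpha> > 0"
  shows "norm (term2 \<alpha> \<xi> c (Suc m) k) \<le>
     (\<bar>(\<alpha>+1) gchoose (2*m+2)\<bar> * \<bar>\<xi>\<bar>^(2*m+2)) * (\<bar>of_int k\<bar> powr \<alpha> * cmod (c k))"
proof (cases "k = 0")
  case True thus ?thesis by (simp add: term2_def dx_def Lambda_def)
next
  case False
  have k1: "\<bar>real_of_int k\<bar> \<ge> 1" using False by linarith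
  have e: "2 * Suc m = 2*m+2" by simp
  have pw: "\<bar>real_of_int k\<bar> * \<bar>real_of_int k\<bar> powr (\<alpha> - 2 * real (Suc m)) \<le> \<bar>real_of_int k\<bar> powr \<alpha>"
  proof -
    have "\<bar>real_of_int k\<bar> * \<bar>real_of_int k\<bar> powr (\<alpha> - 2 * real (Suc m))
        = \<bar>real_of_int k\<bar> powr 1 * \<bar>real_of_int k\<bar> powr (\<alpha> - 2 * real (Suc m))"
    proof -
      have r1: "\<bar>real_of_int k\<bar> powr 1 = \<bar>real_of_int k\<bar>" by simp
      show ?thesis by (simp only: r1)
    qed
    also have "\<dots> = \<bar>real_of_int k\<bar> powr (1 + (\<alpha> - 2 * real (Suc m)))" by (rule powr_add[symmetric])
    also have "\<dots> \<le> \<bar>real_of_int k\<bar> powr \<alpha>" by (rule powr_mono[OF _ k1]) simp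
    finally show ?thesis .
  qed
  have "norm (term2 \<alpha> \<xi> c (Suc m) k) =
     (\<bar>(\<alpha>+1) gchoose (2*m+2)\<bar> * \<bar>\<xi>\<bar>^(2*m+2)) *
       ((\<bar>real_of_int k\<bar> * \<bar>of_int k\<bar> powr (\<alpha> - 2 * real (Suc m))) * cmod (c k))"
    unfolding term2_def e dx_def Lambda_def proj0_def using False
    by (simp add: norm_mult abs_mult power_abs norm_power)
  also have "\<dots> \<le> (\<bar>(\<alpha>+1) gchoose (2*m+2)\<bar> * \<bar>\<xi>\<bar>^(2*m+2)) * (\<bar>of_int k\<bar> powr \<alpha> * cmod (c k))"
    by (intro mult_left_mono mult_right_mono pw) auto
  finally show ?thesis .
qed

lemma W_summable:
  fixes \<alpha> :: real and c :: "int \<Rightarrow> complex"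
  assumes "\<alpha> > 0" and "in_Hs (\<alpha> + 1) c"
  shows "(\<lambda>k. (\<bar>of_int k\<bar> powr \<alpha> * cmod (c k))^2) summable_on UNIV"
proof (rule summable_on_comparison_test[OF assms(2)[unfolded in_Hs_def]])
  fix k :: int
  have a: "(\<bar>real_of_int k\<bar> powr \<alpha>)^2 = (\<bar>real_of_int k\<bar> * \<bar>real_of_int k\<bar>) powr \<alpha>"
    unfolding power2_eq_square by (rule powr_mult[symmetric])
  have b: "(\<bar>real_of_int k\<bar> * \<bar>real_of_int k\<bar>) powr \<alpha> \<le> (1 + (real_of_int k)\<^sup>2) powr \<alpha>"
    by (rule powr_mono2) (use assms(1) in \<open>auto simp: power2_eq_square\<close>)
  have c: "(1 + (real_of_int k)\<^sup>2) powr \<alpha> \<le> (1 + (real_of_int k)\<^sup>2) powr (\<alpha> + 1)"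
    by (rule powr_mono) auto
  have "(\<bar>real_of_int k\<bar> powr \<alpha>)^2 \<le> (1 + (real_of_int k)\<^sup>2) powr (\<alpha> + 1)"
    using a b c by linarith
  thus "(\<bar>of_int k\<bar> powr \<alpha> * cmod (c k))^2 \<le> (1 + (real_of_int k)\<^sup>2) powr (\<alpha> + 1) * (cmod (c k))\<^sup>2"
    by (simp add: power_mult_distrib mult_right_mono)
qed simp

theorem lemma3p3:
  fixes \<alpha> :: real and c :: "int \<Rightarrow> complex"
  assumes "\<alpha> > 0" and "in_Hs (\<alpha> + 1) c"
  shows "\<exists>\<delta>>0. \<forall>\<xi>::real. \<bar>\<xi>\<bar> < \<delta> \<longrightarrow>
    (\<exists>g h.
       L2_tendsto (\<lambda>N k. \<Sum>l=1..N. term1 \<alpha> \<xi> c l k) g \<and>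
       L2_tendsto (\<lambda>N k. \<Sum>r=1..N. term2 \<alpha> \<xi> c r k) h \<and>
       (\<forall>k. twisted_op \<alpha> \<xi> c k =
              dx_Lambda \<alpha> c k
            + const_fun (\<i> * of_real (\<xi> * \<bar>\<xi>\<bar> powr \<alpha>) * c 0) k
            + g k + h k))"
proof (intro exI[of _ 1] conjI allI impI)
  show "(0::real) < 1" by simp
  fix \<xi> :: real assume xi: "\<bar>\<xi>\<bar> < 1"
  define B where "B n = \<bar>(\<alpha>+1) gchoose n\<bar> * \<bar>\<xi>\<bar>^n" for n
  have sB: "summable B" unfolding B_def by (rule abs_gchoose_summable) (simp add: xi)
  have B0: "B n \<ge> 0" for n by (simp add: B_def)
  have sB1: "summable (\<lambda>m. B (2*m+1))"
    by (rule summable_reindex_nonneg[OF sB B0]) (auto simp: strict_mono_def)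
  have sB2: "summable (\<lambda>m. B (2*m+2))"
    by (rule summable_reindex_nonneg[OF sB B0]) (auto simp: strict_mono_def)
  define W where "W k = \<bar>real_of_int k\<bar> powr \<alpha> * cmod (c k)" for k :: int
  have sW: "(\<lambda>k. (W k)^2) summable_on UNIV" unfolding W_def by (rule W_summable[OF assms])
  have W0: "W k \<ge> 0" for k by (simp add: W_def)
  have L1: "L2_tendsto (\<lambda>N k. \<Sum>l=1..N. term1 \<alpha> \<xi> c l k) (\<lambda>k. \<Sum>m. term1 \<alpha> \<xi> c (Suc m) k)"
    by (rule L2_tail[OF sB1 B0 _ sW W0]) (unfold B_def W_def, rule bnd1[OF assms(1)])
  have L2: "L2_tendsto (\<lambda>N k. \<Sum>l=1..N. term2 \<alpha> \<xi> c l k) (\<lambda>k. \<Sum>m. term2 \<alpha> \<xi> c (Suc m) k)"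
    by (rule L2_tail[OF sB2 B0 _ sW W0]) (unfold B_def W_def, rule bnd2[OF assms(1)])
  have id: "twisted_op \<alpha> \<xi> c k = dx_Lambda \<alpha> c k
            + const_fun (\<i> * of_real (\<xi> * \<bar>\<xi>\<bar> powr \<alpha>) * c 0) k
            + (\<Sum>m. term1 \<alpha> \<xi> c (Suc m) k) + (\<Sum>m. term2 \<alpha> \<xi> c (Suc m) k)" for k
  proof (cases "k = 0")
    case True
    have "term1 \<alpha> \<xi> c (Suc m) k = 0" for m using True by (simp add: term1_def Lambda_def)
    moreover have "term2 \<alpha> \<xi> c (Suc m) k = 0" for m using True by (simp add: term2_def dx_def Lambda_def)
    ultimately show ?thesis using True by (simp add: twisted_op_def dx_Lambda_def const_fun_def)
  next
    case False
    thus ?thesis using pointwise[OF False xi, of \<alpha> c] by (simp add: const_fun_def)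
  qed
  show "\<exists>g h. L2_tendsto (\<lambda>N k. \<Sum>l=1..N. term1 \<alpha> \<xi> c l k) g \<and>
       L2_tendsto (\<lambda>N k. \<Sum>r=1..N. term2 \<alpha> \<xi> c r k) h \<and>
       (\<forall>k. twisted_op \<alpha> \<xi> c k =
              dx_Lambda \<alpha> c k
            + const_fun (\<i> * of_real (\<xi> * \<bar>\<xi>\<bar> powr \<alpha>) * c 0) k
            + g k + h k)"
    using L1 L2 id by blast
qed

end
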